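(* Consider the following $n$-round game with a finite action set $\mathcal{A}$ of size $K$. In each round $t=1,\dots,n$: (1) an adversary picks a reward function $r_t:\mathcal{A}\to[0,1]$, possibly depending on all past actions of the learner and of the behavior policy; (2) the learner selects an action $A_t\in\mathcal{A}$; (3) an action $A^B_t\in\mathcal{A}$ is drawn from a fixed behavior policy $\pi_B\in\Delta_{\mathcal{A}}$, unknown to the learner; (4) the learner gains $r_t(A_t)$ (which it does not observe) and observes $A^B_t$ and $R^B_t=r_t(A^B_t)$. The learner runs the following algorithm with learning rate $\eta=\sqrt{\log(K)/n}$, $\gamma_1=1+\frac{\eta}{2}$ and $\gamma_t=\frac{\eta}{2}+\sqrt{\log(K(t-1)^2)/(2t-2)}$ for $t\ge2$: it maintains the empirical estimates $\hat\pi_1(a)=0$ and $\hat\pi_t(a)=\frac{1}{t-1}\sum_{k=1}^{t-1}\mathbb{1}\{A^B_k=a\}$ for $t\ge 2$; in round $t$ it plays $A_t\sim\pi_t$, where $$\pi_t(a)=\frac{w_t(a)}{\sum_{a'}w_t(a')},\qquad w_t(a)=\exp\Big(\eta\sum_{k=1}^{t-1}\tilde r_k(a)\Big),$$ and after observing $A^B_t,R^B_t$ it forms $\tilde r_t(a)=\dfrac{R^B_t\,\mathbb{1}\{A^B_t=a\}}{\hat\pi_t(a)+\gamma_t}$ for all $a$. Then for any comparator policy $\pi^*\in\Delta_{\mathcal{A}}$, the regret $\mathcal{R}(\pi^* )=\sum_{t=1}^n\sum_a(\pi^*(a)-\pi_t(a))r_t(a)$ satisfies $$\mathbb{E}[\mathcal{R}(\pi^*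 )]=\mathcal{O}\Big(C(\pi^*;\pi_B)\sqrt{n\log(Kn)}\Big),$$ where $C(\pi^*;\pi_B)=\sum_a\pi^*(a)/\pi_B(a)$.
   Context: $\Delta_{\mathcal{A}}$ is the set of probability distributions on $\mathcal{A}$. $\mathcal{F}_t=\sigma(r_t,A^B_t,A_t,\dots,r_1,A^B_1,A_1)$ is the history up to round $t$, and $\pi_t(a)=\mathbb{P}(A_t=a\mid\mathcal{F}_{t-1})$. The expectation is over all randomness in actions and adaptively chosen rewards. The $\mathcal{O}(\cdot)$ hides absolute constants. *)

theory Defs
  imports "HOL-Probability.Probability"
begin

text \<open>Actions are the natural numbers 0..K-1. A history of length t is a list of
  pairs (A_k, A^B_k) for rounds k = 1..t in chronological order (element k-1 is round k).\<close>

type_synonym hist = "(nat \<times> nat) list"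

definition eta :: "nat \<Rightarrow> nat \<Rightarrow> real" where
  "eta K n = sqrt (ln (real K) / real n)"

definition gam :: "nat \<Rightarrow> nat \<Rightarrow> nat \<Rightarrow> real" where
  "gam K n t = (if t = 1 then 1 + eta K n / 2
     else eta K n / 2 + sqrt (ln (real K * (real t - 1)^2) / (2 * real t - 2)))"

definition pihat :: "hist \<Rightarrow> nat \<Rightarrow> real" where
  "pihat h a = (if h = [] then 0
     else real (length (filter (\<lambda>p. snd p = a) h)) / real (length h))"

text \<open>Importance-weighted reward estimate of round k (k \<ge> 1), computed from history h
  containing at least k rounds; the adversary maps the history of past rounds to the reward function.\<close>
definition rtilde :: "nat \<Rightarrow> nat \<Rightarrow> (hist \<Rightarrow> nat \<Rightarrow> real) \<Rightarrow> hist \<Rightarrow> nat \<Rightarrow> nat \<Rightarrow> real" where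
  "rtilde K n adv h k a =
     (let AB = snd (h ! (k - 1)); RB = adv (take (k - 1) h) AB in
      RB * (if AB = a then 1 else 0) / (pihat (take (k - 1) h) a + gam K n k))"

definition weight :: "nat \<Rightarrow> nat \<Rightarrow> (hist \<Rightarrow> nat \<Rightarrow> real) \<Rightarrow> hist \<Rightarrow> nat \<Rightarrow> real" where
  "weight K n adv h a = exp (eta K n * (\<Sum>k = 1..length h. rtilde K n adv h k a))"

text \<open>Learner's policy pi_t in round t = length h + 1.\<close>
definition pol :: "nat \<Rightarrow> nat \<Rightarrow> (hist \<Rightarrow> nat \<Rightarrow> real) \<Rightarrow> hist \<Rightarrow> nat \<Rightarrow> real" where
  "pol K n adv h a = (if a < K then weight K n adv h a / (\<Sum>a'<K. weight K n adv h a') else 0)"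

primrec game :: "nat \<Rightarrow> nat \<Rightarrow> (hist \<Rightarrow> nat \<Rightarrow> real) \<Rightarrow> nat pmf \<Rightarrow> nat \<Rightarrow> hist pmf" where
  "game K n adv piB 0 = return_pmf []"
| "game K n adv piB (Suc t) =
     game K n adv piB t \<bind> (\<lambda>h.
       embed_pmf (pol K n adv h) \<bind> (\<lambda>A.
       piB \<bind> (\<lambda>B. return_pmf (h @ [(A, B)]))))"

definition regret :: "nat \<Rightarrow> nat \<Rightarrow> (hist \<Rightarrow> nat \<Rightarrow> real) \<Rightarrow> nat pmf \<Rightarrow> hist \<Rightarrow> real" where
  "regret K n adv pistar h =
     (\<Sum>t = 1..n. \<Sum>a<K. (pmf pistar a - pol K n adv (take (t - 1) h) a) * adv (take (t - 1) h) a)"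

definition expected_regret :: "nat \<Rightarrow> nat \<Rightarrow> (hist \<Rightarrow> nat \<Rightarrow> real) \<Rightarrow> nat pmf \<Rightarrow> nat pmf \<Rightarrow> real" where
  "expected_regret K n adv piB pistar =
     measure_pmf.expectation (game K n adv piB n) (regret K n adv pistar)"

definition conc :: "nat \<Rightarrow> nat pmf \<Rightarrow> nat pmf \<Rightarrow> real" where
  "conc K pistar piB = (\<Sum>a<K. pmf pistar a / pmf piB a)"

end

theory Submission
  imports Defs
begin


lemma key_exp:
  fixes y :: real
  assumes "0 \<le> y" "y \<le> 2"
  shows "(1 - y/2) * (exp y - 1) \<le> y"
proof -
  define f where "f = (\<lambda>x::real. x - (1 - x/2) * (exp x - 1))"
  have d: "(f has_real_derivative (1 - exp x + x * exp x)/2) (at x)" for x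
    unfolding f_def by (auto intro!: derivative_eq_intros simp: field_simps)
  have nn: "0 \<le> (1 - exp x + x * exp x)/2" for x :: real
  proof -
    have "1 + (-x) \<le> exp (-x)" by (rule exp_ge_add_one_self)
    hence "exp x * (1 - x) \<le> exp x * exp (-x)" by (intro mult_left_mono) auto
    hence "exp x * (1 - x) \<le> 1" by (simp add: exp_minus field_simps)
    thus ?thesis by (simp add: algebra_simps)
  qed
  have "f 0 \<le> f y"
    by (rule DERIV_nonneg_imp_nondecreasing[OF assms(1)]) (use d nn in blast)
  thus ?thesis by (simp add: f_def)
qed

lemma integral_bind_pmf_fin:
  fixes f :: "'b \<Rightarrow> real"
  assumes fin: "finite (set_pmf M)" and finN: "\<And>x. x \<in> set_pmf M \<Longrightarrow> finite (set_pmf (N x))"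
  shows "measure_pmf.expectation (bind_pmf M N) f =
         measure_pmf.expectation M (\<lambda>x. measure_pmf.expectation (N x) f)"
proof -
  define U where "U = (\<Union>x\<in>set_pmf M. set_pmf (N x))"
  have U: "finite U" using fin finN by (auto simp: U_def)
  have "measure_pmf.expectation (bind_pmf M N) f = (\<Sum>y\<in>U. f y * pmf (bind_pmf M N) y)"
    by (rule integral_measure_pmf_real) (use U in \<open>auto simp: U_def\<close>)
  also have "\<dots> = (\<Sum>y\<in>U. f y * (\<Sum>x\<in>set_pmf M. pmf (N x) y * pmf M x))"
    by (intro sum.cong refl arg_cong2[where f="(*)"], unfold pmf_bind, rule integral_measure_pmf_real)
       (use fin in auto)
  also have "\<dots> = (\<Sum>x\<in>set_pmf M. (\<Sum>y\<in>U. f y * pmf (N x) y) * pmf M x)"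
    unfolding sum_distrib_left sum_distrib_right by (subst sum.swap) (simp add: mult_ac)
  also have "\<dots> = (\<Sum>x\<in>set_pmf M. measure_pmf.expectation (N x) f * pmf M x)"
    by (intro sum.cong refl arg_cong2[where f="(*)"], rule integral_measure_pmf_real[symmetric])
       (use U in \<open>auto simp: U_def\<close>)
  also have "\<dots> = measure_pmf.expectation M (\<lambda>x. measure_pmf.expectation (N x) f)"
    by (rule integral_measure_pmf_real[symmetric]) (use fin in auto)
  finally show ?thesis .
qed



definition cnt :: "nat \<Rightarrow> hist \<Rightarrow> nat" where
  "cnt a h = length (filter (\<lambda>p. snd p = a) h)"

lemma map_eq_bernoulli: "map_pmf (\<lambda>B. B = a) M = bernoulli_pmf (pmf M a)"
proof (rule pmf_eqI)
  fix b :: bool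
  show "pmf (map_pmf (\<lambda>B. B = a) M) b = pmf (bernoulli_pmf (pmf M a)) b"
  proof (cases b)
    case True
    then show ?thesis by (simp add: pmf_map vimage_def measure_pmf_single pmf_le_1)
  next
    case False
    have e: "{x. x \<noteq> a} = UNIV - {a}" by auto
    have "measure_pmf.prob M {x. x \<noteq> a} = 1 - pmf M a"
      unfolding e using measure_pmf.prob_compl[of "{a}" M] by (simp add: measure_pmf_single Compl_eq)
    then show ?thesis using False by (simp add: pmf_map vimage_def pmf_le_1)
  qed
qed

locale bandit =
  fixes K n :: nat and adv :: "hist \<Rightarrow> nat \<Rightarrow> real" and piB pistar :: "nat pmf"
  assumes K2: "2 \<le> K" and n1: "1 \<le> n" and sB: "set_pmf piB \<subseteq> {..<K}"
    and sS: "set_pmf pistar \<subseteq> {..<K}"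
    and supp: "\<And>a. pmf pistar a > 0 \<Longrightarrow> pmf piB a > 0"
    and adv0: "\<And>h a. 0 \<le> adv h a" and adv1: "\<And>h a. adv h a \<le> 1"
begin

lemma lnK_pos: "0 < ln (real K)" using K2 by simp

lemma eta_pos: "0 < eta K n"
  unfolding eta_def using lnK_pos n1 by simp

lemma weight_pos: "0 < weight K n adv h a"
  by (simp add: weight_def)

lemma sumw_pos: "0 < (\<Sum>a'<K. weight K n adv h a')"
  using K2 by (intro sum_pos) (auto simp: weight_pos lessThan_empty_iff)

lemma pol_nonneg: "0 \<le> pol K n adv h a"
  unfolding pol_def using sumw_pos[of h] weight_pos[of h a] by simp

lemma sum_pol: "(\<Sum>a<K. pol K n adv h a) = 1"
  unfolding pol_def using sumw_pos[of h] by (simp add: sum_divide_distrib[symmetric])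

lemma pol_le1: "pol K n adv h a \<le> 1"
proof (cases "a < K")
  case True
  have "pol K n adv h a \<le> (\<Sum>a<K. pol K n adv h a)"
    by (rule member_le_sum) (use True pol_nonneg in auto)
  then show ?thesis using sum_pol by simp
qed (simp add: pol_def)

lemma pmf_embed_pol: "pmf (embed_pmf (pol K n adv h)) a = pol K n adv h a"
proof (rule pmf_embed_pmf)
  show "\<And>x. 0 \<le> pol K n adv h x" by (rule pol_nonneg)
  have "(\<integral>\<^sup>+x. ennreal (pol K n adv h x) \<partial>count_space UNIV) = (\<Sum>x<K. ennreal (pol K n adv h x))"
    by (rule nn_integral_count_space') (auto simp: pol_def)
  also have "\<dots> = ennreal (\<Sum>x<K. pol K n adv h x)"
    by (rule sum_ennreal) (rule pol_nonneg)
  finally show "(\<integral>\<^sup>+x. ennreal (pol K n adv h x) \<partial>count_space UNIV) = 1"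
    by (simp add: sum_pol)
qed

lemma set_embed_pol: "set_pmf (embed_pmf (pol K n adv h)) \<subseteq> {..<K}"
  by (auto simp: set_pmf_eq pmf_embed_pol pol_def)

abbreviation G where "G t \<equiv> game K n adv piB t"

lemma game_supp: "h \<in> set_pmf (G t) \<Longrightarrow> length h = t \<and> set h \<subseteq> {..<K} \<times> {..<K}"
proof (induction t arbitrary: h)
  case 0 then show ?case by simp
next
  case (Suc t)
  then show ?case using set_embed_pol sB by fastforce
qed

lemma game_fin: "finite (set_pmf (G t))"
proof (rule finite_subset)
  show "set_pmf (G t) \<subseteq> {xs. set xs \<subseteq> {..<K} \<times> {..<K} \<and> length xs = t}"
    using game_supp by blast
  show "finite {xs. set xs \<subseteq> {..<K} \<times> {..<K} \<and> length xs = t}"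
    by (rule finite_lists_length_eq) simp
qed

lemma game_take_aux: "map_pmf (take t) (G (t + s)) = G t"
proof (induction s)
  case 0
  have "map_pmf (take t) (G t) = map_pmf id (G t)"
    by (intro map_pmf_cong refl) (simp add: game_supp)
  then show ?case by simp
next
  case (Suc s)
  have "map_pmf (take t) (G (t + Suc s)) = G (t + s) \<bind> (\<lambda>h. return_pmf (take t h))"
    by (simp add: map_bind_pmf bind_return_pmf map_pmf_def[where f="take t"] game_supp cong: bind_pmf_cong)
  also have "\<dots> = map_pmf (take t) (G (t + s))" by (simp add: map_pmf_def)
  finally show ?case using Suc by simp
qed

lemma game_take: "t \<le> N \<Longrightarrow> map_pmf (take t) (G N) = G t"
  using game_take_aux[of t "N - t"] by simp

lemma cnt_snoc: "cnt a (h @ [(A, B)]) = cnt a h + (if B = a then 1 else 0)"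
  by (simp add: cnt_def)

lemma game_cnt: "map_pmf (cnt a) (G t) = binomial_pmf t (pmf piB a)"
proof (induction t)
  case 0 then show ?case by (simp add: cnt_def binomial_pmf_0 pmf_le_1)
next
  case (Suc t)
  have p: "pmf piB a \<in> {0..1}" by (simp add: pmf_le_1)
  have "map_pmf (cnt a) (G (Suc t)) =
      G t \<bind> (\<lambda>h. map_pmf (\<lambda>B. B = a) piB \<bind> (\<lambda>b. return_pmf ((if b then 1 else 0) + cnt a h)))"
    by (simp add: map_bind_pmf bind_map_pmf cnt_snoc bind_return_pmf add.commute)
  also have "\<dots> = map_pmf (cnt a) (G t) \<bind> (\<lambda>k. bernoulli_pmf (pmf piB a) \<bind> (\<lambda>b. return_pmf ((if b then 1 else 0) + k)))"
    by (simp add: bind_map_pmf map_eq_bernoulli)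
  also have "\<dots> = binomial_pmf (Suc t) (pmf piB a)"
    by (subst binomial_pmf_Suc[OF p], subst Suc, subst bind_commute_pmf) simp
  finally show ?case .
qed

end


lemma sum1: "(\<Sum>k=1..n. g k) = (\<Sum>k<n. g (Suc k))"
  using sum.atLeast1_atMost_eq[of g n] by simp

context bandit begin

abbreviation et where "et \<equiv> eta K n"

definition sd :: "nat \<Rightarrow> real" where
  "sd t = sqrt (ln (real K * (real t - 1)^2) / (2 * real t - 2))"

lemma sd_nonneg: "2 \<le> t \<Longrightarrow> 0 \<le> sd t"
proof -
  assume t: "2 \<le> t"
  have "1 \<le> (real t - 1)^2" using t by (simp add: one_le_power)
  moreover have "1 \<le> real K" using K2 by simp
  ultimately have "1 \<le> real K * (real t - 1)^2" by (metis mult_mono' mult_1 zero_le_one)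
  then have "0 \<le> ln (real K * (real t - 1)^2)" by simp
  then show ?thesis unfolding sd_def using t by simp
qed

lemma gam_ge2: "2 \<le> t \<Longrightarrow> gam K n t = et / 2 + sd t"
  by (simp add: gam_def sd_def)

lemma gam1: "gam K n 1 = 1 + et / 2"
  by (simp add: gam_def)

lemma gam_ge: "1 \<le> t \<Longrightarrow> et / 2 \<le> gam K n t"
proof (cases "t = 1")
  case True
  then show ?thesis using gam1 eta_pos by simp
next
  case False
  assume "1 \<le> t"
  then have "2 \<le> t" using False by simp
  then show ?thesis by (simp add: gam_ge2 sd_nonneg)
qed

lemma gam_pos: "1 \<le> t \<Longrightarrow> 0 < gam K n t"
  using gam_ge eta_pos by (smt (verit) half_gt_zero)

lemma pihat_nonneg: "0 \<le> pihat h a" by (simp add: pihat_def)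

lemma pihat_le1: "pihat h a \<le> 1"
  by (auto simp: pihat_def intro!: divide_le_eq_1_pos[THEN iffD2] length_filter_le)

lemma pihat_cnt: "pihat h a = (if h = [] then 0 else real (cnt a h) / real (length h))"
  by (simp add: pihat_def cnt_def)

lemma rtilde_eq: "1 \<le> k \<Longrightarrow> rtilde K n adv h k a =
   (if snd (h ! (k - 1)) = a then adv (take (k - 1) h) a / (pihat (take (k - 1) h) a + gam K n k) else 0)"
  by (simp add: rtilde_def Let_def)

lemma rtilde_nonneg: "1 \<le> k \<Longrightarrow> 0 \<le> rtilde K n adv h k a"
  using gam_pos[of k] pihat_nonneg adv0 by (simp add: rtilde_eq add_pos_nonneg less_imp_le)

lemma rtilde_le: "1 \<le> k \<Longrightarrow> et * rtilde K n adv h k a \<le> 2"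
proof -
  assume k: "1 \<le> k"
  let ?D = "pihat (take (k - 1) h) a + gam K n k"
  have D: "et / 2 \<le> ?D" using gam_ge[OF k] pihat_nonneg by (smt (verit))
  have "rtilde K n adv h k a \<le> 1 / ?D"
    using k D eta_pos adv1 adv0 by (auto simp: rtilde_eq intro!: divide_right_mono)
  also have "\<dots> \<le> 1 / (et / 2)" using D eta_pos by (intro divide_left_mono) auto
  finally show ?thesis using eta_pos by (simp add: field_simps)
qed

lemma rtilde_take: "1 \<le> k \<Longrightarrow> k \<le> j \<Longrightarrow> rtilde K n adv (take j h) k a = rtilde K n adv h k a"
  by (simp add: rtilde_def Let_def take_take min_absorb1)

lemma potential:
  assumes len: "length h = n"
  shows "(\<Sum>t=1..n. \<Sum>a<K. pmf pistar a * rtilde K n adv h t a) \<le>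
         ln (real K) / et + (\<Sum>t=1..n. \<Sum>a<K. pol K n adv (take (t - 1) h) a * ((exp (et * rtilde K n adv h t a) - 1) / et))"
proof -
  define rt where "rt k a = rtilde K n adv h k a" for k a
  define S where "S j a = (\<Sum>k=1..j. rt k a)" for j a
  define W where "W j = (\<Sum>a<K. exp (et * S j a))" for j
  define P where "P j a = pol K n adv (take j h) a" for j a
  have Wpos: "0 < W j" for j
    unfolding W_def using K2 by (intro sum_pos) (auto simp: lessThan_empty_iff)
  have polS: "P j a = exp (et * S j a) / W j" if "j \<le> n" "a < K" for j a
  proof -
    have jl: "j \<le> length h" using that(1) len by simp
    have "weight K n adv (take j h) b = exp (et * S j b)" for b
      unfolding weight_def S_def rt_def using jl
      by (auto intro!: arg_cong[where f="\<lambda>x. exp (et * x)"] sum.cong rtilde_take simp: min_absorb1)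
    then show ?thesis unfolding P_def pol_def W_def using that by simp
  qed
  have step: "ln (W (Suc j)) - ln (W j) \<le> (\<Sum>a<K. P j a * (exp (et * rt (Suc j) a) - 1))" if j: "j < n" for j
  proof -
    have "W (Suc j) = (\<Sum>a<K. exp (et * S j a) * exp (et * rt (Suc j) a))"
      unfolding W_def S_def by (simp add: distrib_left exp_add)
    also have "\<dots> = (\<Sum>a<K. W j * (P j a * exp (et * rt (Suc j) a)))"
      using polS j Wpos[of j] by (intro sum.cong) auto
    also have "\<dots> = W j * (1 + (\<Sum>a<K. P j a * (exp (et * rt (Suc j) a) - 1)))"
      using sum_pol[of "take j h"] by (simp add: sum_distrib_left[symmetric] right_diff_distrib sum_subtractf P_def)
    finally have eq: "W (Suc j) = W j * (1 + (\<Sum>a<K. P j a * (exp (et * rt (Suc j) a) - 1)))" .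
    have x0: "0 \<le> (\<Sum>a<K. P j a * (exp (et * rt (Suc j) a) - 1))"
      using eta_pos rtilde_nonneg[of "Suc j" h] unfolding rt_def P_def
      by (intro sum_nonneg mult_nonneg_nonneg pol_nonneg) auto
    show ?thesis unfolding eq using Wpos[of j] x0
      by (simp add: ln_mult ln_add_one_self_le_self add_pos_nonneg)
  qed
  have W0: "W 0 = real K" by (simp add: W_def S_def)
  have "ln (W n) - ln (W 0) = (\<Sum>j<n. ln (W (Suc j)) - ln (W j))"
    by (rule sum_lessThan_telescope[symmetric])
  also have "\<dots> \<le> (\<Sum>j<n. \<Sum>a<K. P j a * (exp (et * rt (Suc j) a) - 1))"
    by (intro sum_mono step) auto
  finally have up: "ln (W n) \<le> ln (real K) + (\<Sum>j<n. \<Sum>a<K. P j a * (exp (et * rt (Suc j) a) - 1))"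
    using W0 by simp
  have low: "et * S n a \<le> ln (W n)" if "a < K" for a
  proof -
    have "exp (et * S n a) \<le> W n" unfolding W_def
      by (rule member_le_sum) (use that in auto)
    then show ?thesis by (metis exp_le_cancel_iff exp_ln Wpos)
  qed
  have "et * (\<Sum>a<K. pmf pistar a * S n a) = (\<Sum>a<K. pmf pistar a * (et * S n a))"
    by (simp add: sum_distrib_left mult_ac)
  also have "\<dots> \<le> (\<Sum>a<K. pmf pistar a * ln (W n))"
    by (intro sum_mono mult_left_mono low) auto
  also have "\<dots> = ln (W n)"
    using sum_pmf_eq_1[OF _ sS] by (simp add: sum_distrib_right[symmetric])
  finally have main: "et * (\<Sum>a<K. pmf pistar a * S n a) \<le> ln (real K) + (\<Sum>j<n. \<Sum>a<K. P j a * (exp (et * rt (Suc j) a) - 1))"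
    using up by linarith
  have lhs: "(\<Sum>t=1..n. \<Sum>a<K. pmf pistar a * rtilde K n adv h t a) = (\<Sum>a<K. pmf pistar a * S n a)"
    unfolding S_def rt_def by (subst sum.swap) (simp add: sum_distrib_left)
  have rhs: "(\<Sum>t=1..n. \<Sum>a<K. pol K n adv (take (t - 1) h) a * ((exp (et * rtilde K n adv h t a) - 1) / et))
       = (\<Sum>j<n. \<Sum>a<K. P j a * (exp (et * rt (Suc j) a) - 1)) / et"
    unfolding sum1 P_def rt_def by (simp add: sum_divide_distrib)
  show ?thesis unfolding lhs rhs using main eta_pos
    by (simp add: field_simps)
qed

definition X :: "nat \<Rightarrow> hist \<Rightarrow> real" where
  "X t h = (\<Sum>a<K. pmf pistar a * (adv (take (t - 1) h) a - rtilde K n adv h t a))"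

definition Y :: "nat \<Rightarrow> hist \<Rightarrow> real" where
  "Y t h = (\<Sum>a<K. pol K n adv (take (t - 1) h) a *
              ((exp (et * rtilde K n adv h t a) - 1) / et - adv (take (t - 1) h) a))"

lemma pathwise:
  assumes len: "length h = n"
  shows "regret K n adv pistar h \<le> ln (real K) / et + (\<Sum>t=1..n. X t h) + (\<Sum>t=1..n. Y t h)"
proof -
  have "regret K n adv pistar h = (\<Sum>t=1..n. X t h) +
     ((\<Sum>t=1..n. \<Sum>a<K. pmf pistar a * rtilde K n adv h t a) -
      (\<Sum>t=1..n. \<Sum>a<K. pol K n adv (take (t - 1) h) a * ((exp (et * rtilde K n adv h t a) - 1) / et)))
     + (\<Sum>t=1..n. Y t h)"
    unfolding regret_def X_def Y_def
    by (simp add: sum.distrib[symmetric] sum_subtractf[symmetric] algebra_simps)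
  then show ?thesis using potential[OF len] by linarith
qed

lemma X_take: "1 \<le> t \<Longrightarrow> t \<le> length h \<Longrightarrow> X t (take t h) = X t h"
  by (simp add: X_def rtilde_take min_def)

lemma Y_take: "1 \<le> t \<Longrightarrow> t \<le> length h \<Longrightarrow> Y t (take t h) = Y t h"
  by (simp add: Y_def rtilde_take min_def)

end


lemma good_case:
  fixes p r D e :: real
  assumes e: "0 < e" and D: "0 < D" and pD: "p + e / 2 \<le> D" and p: "0 \<le> p"
    and r0: "0 \<le> r" and r1: "r \<le> 1"
  shows "p * (exp (e * r / D) - 1) / e \<le> r"
proof -
  define z where "z = e / D"
  define y where "y = z * r"
  have z0: "0 < z" using e D by (simp add: z_def)
  have z2: "z \<le> 2" using e D pD p by (simp add: z_def field_simps)
  have y0: "0 \<le> y" using z0 r0 by (simp add: y_def)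
  have yz: "y \<le> z" using z0 r1 r0 by (simp add: y_def mult_left_le)
  have ey: "0 \<le> exp y - 1" using y0 by simp
  have "D * (1 - z / 2) = D - e / 2" using D by (simp add: z_def field_simps)
  then have pz: "p \<le> D * (1 - z / 2)" using pD by linarith
  have "p * (exp y - 1) \<le> D * (1 - z / 2) * (exp y - 1)"
    by (rule mult_right_mono[OF pz ey])
  also have "\<dots> \<le> D * (1 - y / 2) * (exp y - 1)"
    using yz D ey by (intro mult_right_mono mult_left_mono) auto
  also have "\<dots> \<le> D * y"
    using key_exp[OF y0] yz z2 D by (simp add: mult.assoc)
  also have "\<dots> = e * r" using D by (simp add: y_def z_def)
  finally have "p * (exp y - 1) \<le> e * r" .
  moreover have "e * r / D = y" by (simp add: y_def z_def)
  ultimately show ?thesis using e by (simp add: field_simps)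
qed

lemma bad_case:
  fixes p r D e :: real
  assumes e: "0 < e" and D: "e / 2 \<le> D" and p0: "0 \<le> p" and p1: "p \<le> 1"
    and r0: "0 \<le> r" and r1: "r \<le> 1"
  shows "p * (exp (e * r / D) - 1) / e - r \<le> (exp 2 - 1) / e"
proof -
  have Dp: "0 < D" using e D by linarith
  have "e * r / D \<le> e / D" using r1 e Dp by (simp add: divide_right_mono)
  also have "\<dots> \<le> 2" using D Dp e by (simp add: field_simps)
  finally have "exp (e * r / D) - 1 \<le> exp 2 - 1" by simp
  moreover have "0 \<le> exp (e * r / D) - 1" using e r0 Dp by simp
  ultimately have "p * (exp (e * r / D) - 1) \<le> exp 2 - 1"
    using p0 p1 by (metis mult_left_le_one_le order_trans)
  then have "p * (exp (e * r / D) - 1) / e \<le> (exp 2 - 1) / e"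
    using e by (intro divide_right_mono) auto
  then show ?thesis using r0 by linarith
qed

lemma x_term:
  fixes r p q g s :: real
  assumes r0: "0 \<le> r" and r1: "r \<le> 1" and p0: "0 < p" and p1: "p \<le> 1" and q: "0 \<le> q"
    and g: "0 < g" and s: "0 \<le> s"
  shows "r * (1 - p / (q + g)) \<le> (g + s + (if p + s \<le> q then 1 else 0)) / p"
proof (cases "p + s \<le> q")
  case True
  have "r * (1 - p / (q + g)) \<le> 1"
  proof -
    have "1 - p / (q + g) \<le> 1" using p0 q g by simp
    then show ?thesis using r0 r1 by (smt (verit) mult_left_le mult_nonneg_nonpos)
  qed
  also have "1 \<le> 1 / p" using p0 p1 by simp
  also have "\<dots> \<le> (g + s + 1) / p" using g s p0 by (simp add: divide_right_mono)
  finally show ?thesis using True by simp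
next
  case False
  let ?D = "q + g"
  have Dp: "0 < ?D" using q g by simp
  show ?thesis
  proof (cases "?D \<le> p")
    case True
    then have "1 - p / ?D \<le> 0" using Dp by (simp add: field_simps)
    then have "r * (1 - p / ?D) \<le> 0" using r0 by (simp add: mult_nonneg_nonpos)
    also have "0 \<le> (g + s + (if p + s \<le> q then 1 else 0)) / p" using g s p0 by simp
    finally show ?thesis .
  next
    case Dg: False
    have "r * (1 - p / ?D) \<le> 1 - p / ?D"
      using r0 r1 Dg Dp by (intro mult_left_le_one_le) (auto simp: field_simps)
    also have "\<dots> = (?D - p) / ?D" using Dp by (simp add: field_simps)
    also have "\<dots> \<le> (?D - p) / p" using Dg p0 by (intro divide_left_mono) auto
    also have "\<dots> \<le> (g + s) / p" using False p0 by (intro divide_right_mono) auto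
    finally show ?thesis using False by simp
  qed
qed

context bandit begin

lemma game_Suc_exp:
  "measure_pmf.expectation (G (Suc m)) f =
   measure_pmf.expectation (G m) (\<lambda>h. measure_pmf.expectation (embed_pmf (pol K n adv h))
      (\<lambda>A. \<Sum>b<K. f (h @ [(A, b)]) * pmf piB b))"
proof -
  have finE: "finite (set_pmf (embed_pmf (pol K n adv h)))" for h
    using set_embed_pol by (rule finite_subset) simp
  have finB: "finite (set_pmf piB)" using sB by (rule finite_subset) simp
  have "measure_pmf.expectation (G (Suc m)) f =
     measure_pmf.expectation (G m) (\<lambda>h. measure_pmf.expectation (embed_pmf (pol K n adv h))
      (\<lambda>A. measure_pmf.expectation piB (\<lambda>B. f (h @ [(A, B)]))))"
    by (simp add: integral_bind_pmf_fin game_fin finE finB)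
  also have "\<dots> = measure_pmf.expectation (G m) (\<lambda>h. measure_pmf.expectation (embed_pmf (pol K n adv h))
      (\<lambda>A. \<Sum>b<K. f (h @ [(A, b)]) * pmf piB b))"
    by (intro arg_cong[where f="measure_pmf.expectation _"] ext integral_measure_pmf_real) (use sB in auto)
  finally show ?thesis .
qed

lemma rtilde_snoc: "length h = m \<Longrightarrow>
  rtilde K n adv (h @ [(A, b)]) (Suc m) a = (if b = a then adv h a / (pihat h a + gam K n (Suc m)) else 0)"
  by (auto simp: rtilde_eq nth_append)

definition XB :: "nat \<Rightarrow> hist \<Rightarrow> real" where
  "XB m h = (\<Sum>a<K. pmf pistar a * (adv h a * (1 - pmf piB a / (pihat h a + gam K n (Suc m)))))"

definition YB :: "nat \<Rightarrow> hist \<Rightarrow> real" where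
  "YB m h = (\<Sum>a<K. pol K n adv h a *
     (pmf piB a * (exp (et * adv h a / (pihat h a + gam K n (Suc m))) - 1) / et - adv h a))"

lemma sumB: "(\<Sum>b<K. pmf piB b) = 1"
  using sum_pmf_eq_1[OF _ sB] by simp

lemma X_snoc: "length h = m \<Longrightarrow> X (Suc m) (h @ [(A, b)]) =
   (\<Sum>a<K. pmf pistar a * adv h a - (if b = a then pmf pistar a * adv h a / (pihat h a + gam K n (Suc m)) else 0))"
  unfolding X_def by (intro sum.cong refl) (auto simp: rtilde_snoc algebra_simps)

lemma Y_snoc: "length h = m \<Longrightarrow> Y (Suc m) (h @ [(A, b)]) =
   (\<Sum>a<K. (if b = a then pol K n adv h a * ((exp (et * adv h a / (pihat h a + gam K n (Suc m))) - 1) / et) else 0)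
       - pol K n adv h a * adv h a)"
  unfolding Y_def by (intro sum.cong refl) (auto simp: rtilde_snoc algebra_simps)

lemma swap_delta:
  fixes u v :: "nat \<Rightarrow> real"
  shows "(\<Sum>b<K. (\<Sum>a<K. v a - (if b = a then u a else 0)) * pmf piB b) =
         (\<Sum>a<K. v a - pmf piB a * u a)"
proof -
  have "(\<Sum>b<K. (\<Sum>a<K. v a - (if b = a then u a else 0)) * pmf piB b) =
        (\<Sum>b<K. \<Sum>a<K. pmf piB b * v a - (if b = a then pmf piB a * u a else 0))"
    by (intro sum.cong refl, subst sum_distrib_right, intro sum.cong refl) (auto simp: algebra_simps)
  also have "\<dots> = (\<Sum>a<K. \<Sum>b<K. pmf piB b * v a - (if b = a then pmf piB a * u a else 0))"
    by (rule sum.swap)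
  also have "\<dots> = (\<Sum>a<K. v a - pmf piB a * u a)"
  proof (intro sum.cong refl)
    fix a assume a: "a \<in> {..<K}"
    have "(\<Sum>b<K. pmf piB b * v a - (if b = a then pmf piB a * u a else 0)) =
          (\<Sum>b<K. pmf piB b) * v a - (\<Sum>b<K. (if b = a then pmf piB a * u a else 0))"
      by (simp add: sum_subtractf sum_distrib_right)
    also have "\<dots> = v a - pmf piB a * u a" using a by (simp add: sumB)
    finally show "(\<Sum>b<K. pmf piB b * v a - (if b = a then pmf piB a * u a else 0)) = v a - pmf piB a * u a" .
  qed
  finally show ?thesis .
qed

lemma X_step: "length h = m \<Longrightarrow> (\<Sum>b<K. X (Suc m) (h @ [(A, b)]) * pmf piB b) = XB m h"
proof -
  assume len: "length h = m"
  show ?thesis unfolding X_snoc[OF len] swap_delta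
    by (simp add: XB_def algebra_simps)
qed

lemma Y_step: "length h = m \<Longrightarrow> (\<Sum>b<K. Y (Suc m) (h @ [(A, b)]) * pmf piB b) = YB m h"
proof -
  assume len: "length h = m"
  have "(\<Sum>b<K. Y (Suc m) (h @ [(A, b)]) * pmf piB b) =
     (\<Sum>b<K. (\<Sum>a<K. (- pol K n adv h a * adv h a) - (if b = a then - (pol K n adv h a * ((exp (et * adv h a / (pihat h a + gam K n (Suc m))) - 1) / et)) else 0)) * pmf piB b)"
    unfolding Y_snoc[OF len] by (intro sum.cong refl arg_cong2[where f="(*)"]) auto
  also have "\<dots> = YB m h"
    by (subst swap_delta) (simp add: YB_def algebra_simps)
  finally show ?thesis .
qed

lemma EX_step: "measure_pmf.expectation (G (Suc m)) (X (Suc m)) = measure_pmf.expectation (G m) (XB m)"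
  by (subst game_Suc_exp, intro integral_cong_AE) (auto simp: AE_measure_pmf_iff X_step game_supp)

lemma EY_step: "measure_pmf.expectation (G (Suc m)) (Y (Suc m)) = measure_pmf.expectation (G m) (YB m)"
  by (subst game_Suc_exp, intro integral_cong_AE) (auto simp: AE_measure_pmf_iff Y_step game_supp)

end


lemma term_le_one:
  fixes r p D :: real
  assumes "0 \<le> r" "r \<le> 1" "0 \<le> p" "0 < D"
  shows "r * (1 - p / D) \<le> 1"
proof -
  have "1 - p / D \<le> 1" using assms by simp
  then show ?thesis using assms by (smt (verit) mult_left_le mult_nonneg_nonpos)
qed

lemma pol_term:
  fixes P g c :: real
  assumes "0 \<le> P" "P \<le> 1" "g \<le> c" "0 \<le> c"
  shows "P * g \<le> c"
proof (cases "g \<le> 0")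
  case True then show ?thesis using assms by (smt (verit) mult_nonneg_nonpos)
next
  case False then show ?thesis using assms by (smt (verit) mult_left_le_one_le)
qed

context bandit begin

lemma binom: "binomial_distribution (pmf piB a)"
  unfolding binomial_distribution_def by (simp add: pmf_le_1)

lemma exp_sd: "1 \<le> m \<Longrightarrow> exp (real_of_int (- 2 * int m) * (sd (Suc m))\<^sup>2) \<le> 1 / (real K * (real m)^2)"
proof -
  assume m: "1 \<le> m"
  have pos: "0 < real K * (real m)^2" using K2 m by simp
  have m1: "1 \<le> (real m)^2" using m by (simp add: one_le_power)
  have "1 * 1 \<le> real K * (real m)^2" using K2 m1 by (intro mult_mono) auto
  then have l0: "0 \<le> ln (real K * (real m)^2)" by simp
  have "(sd (Suc m))\<^sup>2 = ln (real K * (real m)^2) / (2 * real m)"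
    unfolding sd_def using l0 m by (simp add: algebra_simps)
  then have "real_of_int (- 2 * int m) * (sd (Suc m))\<^sup>2 = - ln (real K * (real m)^2)"
    using m by (simp add: field_simps)
  then have "exp (real_of_int (- 2 * int m) * (sd (Suc m))\<^sup>2) = 1 / (real K * (real m)^2)"
    using pos by (simp add: exp_minus exp_ln inverse_eq_divide)
  then show ?thesis by simp
qed

lemma prob_hi: "1 \<le> m \<Longrightarrow>
  measure_pmf.expectation (G m) (\<lambda>h. if pmf piB a + sd (Suc m) \<le> pihat h a then 1 else 0) \<le> 1 / (real K * (real m)^2)"
proof -
  assume m: "1 \<le> m"
  let ?p = "pmf piB a" and ?s = "sd (Suc m)"
  have "measure_pmf.expectation (G m) (\<lambda>h. if ?p + ?s \<le> pihat h a then 1 else 0) =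
        measure_pmf.expectation (G m) (\<lambda>h. (indicator {k. ?p + ?s \<le> real k / real m} :: nat \<Rightarrow> real) (cnt a h))"
    using m by (intro integral_cong_AE) (auto simp: AE_measure_pmf_iff pihat_cnt dest!: game_supp)
  also have "\<dots> = measure_pmf.expectation (map_pmf (cnt a) (G m)) (indicator {k. ?p + ?s \<le> real k / real m} :: nat \<Rightarrow> real)"
    by (subst integral_map_pmf) (rule refl)
  also have "\<dots> = measure_pmf.prob (binomial_pmf m ?p) {k. ?p + ?s \<le> real k / real m}"
    by (simp add: game_cnt)
  also have "\<dots> \<le> exp (real_of_int (- 2 * int m) * ?s\<^sup>2)"
    using binomial_distribution.prob_ge'[OF binom, of m ?s] m sd_nonneg[of "Suc m"] by simp
  also have "\<dots> \<le> 1 / (real K * (real m)^2)" by (rule exp_sd[OF m])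
  finally show ?thesis .
qed

lemma prob_lo: "1 \<le> m \<Longrightarrow>
  measure_pmf.expectation (G m) (\<lambda>h. if pihat h a \<le> pmf piB a - sd (Suc m) then 1 else 0) \<le> 1 / (real K * (real m)^2)"
proof -
  assume m: "1 \<le> m"
  let ?p = "pmf piB a" and ?s = "sd (Suc m)"
  have "measure_pmf.expectation (G m) (\<lambda>h. if pihat h a \<le> ?p - ?s then 1 else 0) =
        measure_pmf.expectation (G m) (\<lambda>h. (indicator {k. real k / real m \<le> ?p - ?s} :: nat \<Rightarrow> real) (cnt a h))"
    using m by (intro integral_cong_AE) (auto simp: AE_measure_pmf_iff pihat_cnt dest!: game_supp)
  also have "\<dots> = measure_pmf.expectation (map_pmf (cnt a) (G m)) (indicator {k. real k / real m \<le> ?p - ?s} :: nat \<Rightarrow> real)"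
    by (subst integral_map_pmf) (rule refl)
  also have "\<dots> = measure_pmf.prob (binomial_pmf m ?p) {k. real k / real m \<le> ?p - ?s}"
    by (simp add: game_cnt)
  also have "\<dots> \<le> exp (real_of_int (- 2 * int m) * ?s\<^sup>2)"
    using binomial_distribution.prob_le'[OF binom, of m ?s] m sd_nonneg[of "Suc m"] by simp
  also have "\<dots> \<le> 1 / (real K * (real m)^2)" by (rule exp_sd[OF m])
  finally show ?thesis .
qed

lemma conc_term:
  assumes "pmf piB a > 0 \<Longrightarrow> w \<le> c / pmf piB a"
  shows "pmf pistar a * w \<le> pmf pistar a / pmf piB a * c"
proof (cases "pmf pistar a = 0")
  case True then show ?thesis by simp
next
  case False
  then have "pmf piB a > 0" using supp[of a] pmf_nonneg[of pistar a] by linarith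
  then have "pmf pistar a * w \<le> pmf pistar a * (c / pmf piB a)"
    using assms by (intro mult_left_mono) auto
  then show ?thesis by simp
qed

lemma XB0: "XB 0 h \<le> conc K pistar piB"
  unfolding XB_def conc_def
proof (rule sum_mono)
  fix a
  have "pmf pistar a * (adv h a * (1 - pmf piB a / (pihat h a + gam K n (Suc 0)))) \<le> pmf pistar a / pmf piB a * 1"
  proof (rule conc_term)
    assume p: "pmf piB a > 0"
    have "adv h a * (1 - pmf piB a / (pihat h a + gam K n (Suc 0))) \<le> 1"
      using adv0 adv1 gam_pos[of "Suc 0"] pihat_nonneg[of h a]
      by (intro term_le_one) (auto simp: add_nonneg_pos)
    also have "\<dots> \<le> 1 / pmf piB a" using p pmf_le_1[of piB a] by simp
    finally show "adv h a * (1 - pmf piB a / (pihat h a + gam K n (Suc 0))) \<le> 1 / pmf piB a" .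
  qed
  then show "pmf pistar a * (adv h a * (1 - pmf piB a / (pihat h a + gam K n (Suc 0)))) \<le> pmf pistar a / pmf piB a"
    by simp
qed

lemma XB_pos: "1 \<le> m \<Longrightarrow> XB m h \<le> (\<Sum>a<K. pmf pistar a / pmf piB a *
     (gam K n (Suc m) + sd (Suc m) + (if pmf piB a + sd (Suc m) \<le> pihat h a then 1 else 0)))"
  unfolding XB_def
proof (rule sum_mono)
  fix a assume m: "1 \<le> m"
  show "pmf pistar a * (adv h a * (1 - pmf piB a / (pihat h a + gam K n (Suc m)))) \<le>
        pmf pistar a / pmf piB a * (gam K n (Suc m) + sd (Suc m) + (if pmf piB a + sd (Suc m) \<le> pihat h a then 1 else 0))"
  proof (rule conc_term)
    assume p: "pmf piB a > 0"
    show "adv h a * (1 - pmf piB a / (pihat h a + gam K n (Suc m))) \<le>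
          (gam K n (Suc m) + sd (Suc m) + (if pmf piB a + sd (Suc m) \<le> pihat h a then 1 else 0)) / pmf piB a"
      using adv0 adv1 gam_pos[of "Suc m"] pihat_nonneg[of h a] p pmf_le_1[of piB a] sd_nonneg[of "Suc m"] m
      by (intro x_term) auto
  qed
qed

lemma YB0: "YB 0 h \<le> 0"
  unfolding YB_def
proof (rule sum_nonpos)
  fix a
  let ?D = "pihat h a + gam K n (Suc 0)"
  have "pmf piB a * (exp (et * adv h a / ?D) - 1) / et \<le> adv h a"
  proof (rule good_case)
    show "0 < et" by (rule eta_pos)
    show "0 < ?D" using gam_pos[of "Suc 0"] pihat_nonneg[of h a] by (simp add: add_nonneg_pos)
    show "pmf piB a + et / 2 \<le> ?D" using gam1 pihat_nonneg[of h a] pmf_le_1[of piB a] by simp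
  qed (auto simp: adv0 adv1)
  then show "pol K n adv h a * (pmf piB a * (exp (et * adv h a / ?D) - 1) / et - adv h a) \<le> 0"
    using pol_nonneg by (simp add: mult_nonneg_nonpos)
qed

lemma YB_pos: "1 \<le> m \<Longrightarrow> YB m h \<le> (\<Sum>a<K. (exp 2 - 1) / et * (if pihat h a \<le> pmf piB a - sd (Suc m) then 1 else 0))"
  unfolding YB_def
proof (rule sum_mono)
  fix a assume m: "1 \<le> m"
  let ?D = "pihat h a + gam K n (Suc m)"
  have gS: "gam K n (Suc m) = et / 2 + sd (Suc m)" using m by (intro gam_ge2) simp
  have Dp: "0 < ?D" using gam_pos[of "Suc m"] pihat_nonneg[of h a] by (simp add: add_nonneg_pos)
  have c0: "0 \<le> (exp 2 - 1) / et" using eta_pos by simp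
  have "pmf piB a * (exp (et * adv h a / ?D) - 1) / et - adv h a \<le>
        (exp 2 - 1) / et * (if pihat h a \<le> pmf piB a - sd (Suc m) then 1 else 0)"
  proof (cases "pihat h a \<le> pmf piB a - sd (Suc m)")
    case True
    then show ?thesis using bad_case[OF eta_pos _ pmf_nonneg pmf_le_1 adv0 adv1, of ?D]
        gam_ge[of "Suc m"] pihat_nonneg[of h a] by simp
  next
    case False
    have "pmf piB a * (exp (et * adv h a / ?D) - 1) / et \<le> adv h a"
      by (rule good_case[OF eta_pos Dp]) (use False gS in \<open>auto simp: adv0 adv1\<close>)
    then show ?thesis using False by simp
  qed
  then show "pol K n adv h a * (pmf piB a * (exp (et * adv h a / ?D) - 1) / et - adv h a) \<le>
        (exp 2 - 1) / et * (if pihat h a \<le> pmf piB a - sd (Suc m) then 1 else 0)"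
    using c0 by (intro pol_term pol_nonneg pol_le1) auto
qed

end


context bandit begin

lemma integ: "integrable (measure_pmf (G m)) (f :: hist \<Rightarrow> real)"
  by (rule integrable_measure_pmf_finite[OF game_fin])

lemma conc_nonneg_terms: "0 \<le> pmf pistar a / pmf piB a" by simp

lemma conc_ge1: "1 \<le> conc K pistar piB"
proof -
  have "1 = (\<Sum>a<K. pmf pistar a)" using sum_pmf_eq_1[OF _ sS] by simp
  also have "\<dots> \<le> (\<Sum>a<K. pmf pistar a / pmf piB a)"
  proof (intro sum_mono)
    fix a
    show "pmf pistar a \<le> pmf pistar a / pmf piB a"
    proof (cases "pmf pistar a = 0")
      case False
      then have "pmf piB a > 0" using supp[of a] pmf_nonneg[of pistar a] by linarith
      then show ?thesis using pmf_le_1[of piB a] pmf_nonneg[of pistar a]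
        by (simp add: le_divide_eq mult_left_le)
    qed simp
  qed
  finally show ?thesis by (simp add: conc_def)
qed

definition bx :: "nat \<Rightarrow> real" where
  "bx m = (if m = 0 then 1 else gam K n (Suc m) + sd (Suc m) + 1 / (real K * (real m)^2))"

definition by' :: "nat \<Rightarrow> real" where
  "by' m = (if m = 0 then 0 else (exp 2 - 1) / et * (1 / (real m)^2))"

lemma E_take: fixes f :: "hist \<Rightarrow> real" shows "1 \<le> t \<Longrightarrow> t \<le> n \<Longrightarrow> (\<And>h. length h \<ge> t \<Longrightarrow> f (take t h) = f h) \<Longrightarrow>
   measure_pmf.expectation (G n) f = measure_pmf.expectation (G t) f"
proof -
  assume t: "1 \<le> t" "t \<le> n" and f: "\<And>h. length h \<ge> t \<Longrightarrow> f (take t h) = f h"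
  have "measure_pmf.expectation (G n) f = measure_pmf.expectation (G n) (\<lambda>h. f (take t h))"
    using t by (intro integral_cong_AE) (auto simp: AE_measure_pmf_iff f dest!: game_supp)
  also have "\<dots> = measure_pmf.expectation (map_pmf (take t) (G n)) f"
    by (subst integral_map_pmf) (rule refl)
  also have "\<dots> = measure_pmf.expectation (G t) f" using t by (simp add: game_take)
  finally show ?thesis .
qed

lemma EX_bound: "1 \<le> t \<Longrightarrow> t \<le> n \<Longrightarrow>
   measure_pmf.expectation (G n) (X t) \<le> conc K pistar piB * bx (t - 1)"
proof -
  assume t: "1 \<le> t" "t \<le> n"
  obtain m where tm: "t = Suc m" using t by (cases t) auto
  have "measure_pmf.expectation (G n) (X t) = measure_pmf.expectation (G t) (X t)"
    using t by (intro E_take) (auto simp: X_take)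
  also have "\<dots> = measure_pmf.expectation (G m) (XB m)" unfolding tm by (rule EX_step)
  also have "\<dots> \<le> conc K pistar piB * bx m"
  proof (cases "m = 0")
    case True
    have "measure_pmf.expectation (G m) (XB m) \<le> measure_pmf.expectation (G m) (\<lambda>_. conc K pistar piB)"
      using True by (intro integral_mono integ) (simp add: XB0)
    then show ?thesis using True by (simp add: bx_def)
  next
    case False
    then have m: "1 \<le> m" by simp
    let ?c = "\<lambda>a. pmf pistar a / pmf piB a"
    let ?g = "gam K n (Suc m) + sd (Suc m)"
    let ?I = "\<lambda>a h. if pmf piB a + sd (Suc m) \<le> pihat h a then 1 else (0::real)"
    have "measure_pmf.expectation (G m) (XB m) \<le>
          measure_pmf.expectation (G m) (\<lambda>h. \<Sum>a<K. ?c a * ?g + ?c a * ?I a h)"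
    proof (intro integral_mono integ)
      fix h
      show "XB m h \<le> (\<Sum>a<K. ?c a * ?g + ?c a * ?I a h)"
        using XB_pos[OF m, of h] by (simp only: distrib_left add.assoc)
    qed
    also have "\<dots> = (\<Sum>a<K. ?c a * ?g + ?c a * measure_pmf.expectation (G m) (?I a))"
      by (simp add: integral_sum integ integral_add)
    also have "\<dots> \<le> (\<Sum>a<K. ?c a * ?g + ?c a * (1 / (real K * (real m)^2)))"
      by (intro sum_mono add_left_mono mult_left_mono prob_hi m conc_nonneg_terms)
    also have "\<dots> = (\<Sum>a<K. ?c a * (?g + 1 / (real K * (real m)^2)))"
      by (simp only: distrib_left)
    also have "\<dots> = conc K pistar piB * bx m"
      unfolding bx_def conc_def sum_distrib_right using False by simp
    finally show ?thesis .
  qed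
  finally show ?thesis using tm by simp
qed

lemma EY_bound: "1 \<le> t \<Longrightarrow> t \<le> n \<Longrightarrow>
   measure_pmf.expectation (G n) (Y t) \<le> by' (t - 1)"
proof -
  assume t: "1 \<le> t" "t \<le> n"
  obtain m where tm: "t = Suc m" using t by (cases t) auto
  have "measure_pmf.expectation (G n) (Y t) = measure_pmf.expectation (G t) (Y t)"
    using t by (intro E_take) (auto simp: Y_take)
  also have "\<dots> = measure_pmf.expectation (G m) (YB m)" unfolding tm by (rule EY_step)
  also have "\<dots> \<le> by' m"
  proof (cases "m = 0")
    case True
    have "measure_pmf.expectation (G m) (YB m) \<le> measure_pmf.expectation (G m) (\<lambda>_. 0)"
      using True by (intro integral_mono integ) (simp add: YB0)
    then show ?thesis using True by (simp add: by'_def)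
  next
    case False
    then have m: "1 \<le> m" by simp
    let ?e = "(exp 2 - 1) / et"
    let ?I = "\<lambda>a h. if pihat h a \<le> pmf piB a - sd (Suc m) then 1 else (0::real)"
    have e0: "0 \<le> ?e" using eta_pos by simp
    have "measure_pmf.expectation (G m) (YB m) \<le>
          measure_pmf.expectation (G m) (\<lambda>h. \<Sum>a<K. ?e * ?I a h)"
    proof (intro integral_mono integ)
      fix h
      show "YB m h \<le> (\<Sum>a<K. ?e * ?I a h)"
        using YB_pos[OF m, of h] by simp
    qed
    also have "\<dots> = (\<Sum>a<K. ?e * measure_pmf.expectation (G m) (?I a))"
      by (simp add: integral_sum integ)
    also have "\<dots> \<le> (\<Sum>a<K. ?e * (1 / (real K * (real m)^2)))"
      by (intro sum_mono mult_left_mono prob_lo m e0)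
    also have "\<dots> = by' m"
      using False K2 by (simp add: by'_def)
    finally show ?thesis .
  qed
  finally show ?thesis using tm by simp
qed

lemma E_main: "expected_regret K n adv piB pistar \<le>
   ln (real K) / et + (\<Sum>t=1..n. conc K pistar piB * bx (t - 1)) + (\<Sum>t=1..n. by' (t - 1))"
proof -
  have "expected_regret K n adv piB pistar \<le>
        measure_pmf.expectation (G n) (\<lambda>h. ln (real K) / et + (\<Sum>t=1..n. X t h) + (\<Sum>t=1..n. Y t h))"
    unfolding expected_regret_def
  proof (intro integral_mono_AE integ)
    show "AE h in G n. regret K n adv pistar h \<le> ln (real K) / et + (\<Sum>t=1..n. X t h) + (\<Sum>t=1..n. Y t h)"
      unfolding AE_measure_pmf_iff using game_supp pathwise by blast
  qed
  also have "\<dots> = ln (real K) / et + (\<Sum>t=1..n. measure_pmf.expectation (G n) (X t)) +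
                   (\<Sum>t=1..n. measure_pmf.expectation (G n) (Y t))"
    by (simp add: integral_add integral_sum integ)
  also have "\<dots> \<le> ln (real K) / et + (\<Sum>t=1..n. conc K pistar piB * bx (t - 1)) + (\<Sum>t=1..n. by' (t - 1))"
    by (intro add_mono order_refl sum_mono EX_bound EY_bound) auto
  finally show ?thesis .
qed

end


lemma sum_inv_sqrt_aux: "(\<Sum>m<Suc k. if m = 0 then 0 else 1 / sqrt (real m)) \<le> 2 * sqrt (real k)"
proof (induction k)
  case 0 then show ?case by simp
next
  case (Suc k)
  define a where "a = sqrt (real k)"
  define b where "b = sqrt (real (Suc k))"
  have a0: "0 \<le> a" by (simp add: a_def)
  have b0: "0 < b" by (simp add: b_def)
  have b2: "b^2 = a^2 + 1" by (simp add: a_def b_def)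
  have "(a * b)^2 \<le> (b^2 - 1/2)^2" using b2 by (simp add: power_mult_distrib algebra_simps power2_eq_square)
  moreover have "0 \<le> b^2 - 1/2" using b2 zero_le_power2[of a] by linarith
  ultimately have "a * b \<le> b^2 - 1/2" by (rule power2_le_imp_le)
  then have i: "2 * a * b + 1 \<le> 2 * b^2" by simp
  have "(2 * a * b + 1) / b \<le> 2 * b^2 / b" using i b0 by (intro divide_right_mono) auto
  moreover have "(2 * a * b + 1) / b = 2 * a + 1 / b" using b0 by (simp add: field_simps)
  moreover have "2 * b^2 / b = 2 * b" using b0 by (simp add: power2_eq_square)
  ultimately have "2 * a + 1 / b \<le> 2 * b" by simp
  then have "2 * sqrt (real k) + 1 / sqrt (real (Suc k)) \<le> 2 * sqrt (real (Suc k))"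
    by (simp add: a_def b_def)
  then show ?case using Suc by simp
qed

lemma sum_inv_sqrt: "(\<Sum>m<N. if m = 0 then 0 else 1 / sqrt (real m)) \<le> 2 * sqrt (real N)"
proof (cases N)
  case 0 then show ?thesis by simp
next
  case (Suc k)
  have "sqrt (real k) \<le> sqrt (real N)" using Suc by simp
  then show ?thesis unfolding Suc by (intro order_trans[OF sum_inv_sqrt_aux]) (use Suc in simp)
qed

lemma sum_inv_sq_aux: "1 \<le> N \<Longrightarrow> (\<Sum>m<N. if m = 0 then 0 else 1 / (real m)^2) \<le> 2 - 2 / real N"
proof (induction N rule: dec_induct)
  case base then show ?case by simp
next
  case (step N)
  have N: "1 \<le> real N" using step by simp
  have e1: "2 / real N - 2 / real (Suc N) = 2 / (real N * (real N + 1))"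
    using N by (simp add: field_simps)
  have e2: "1 / (real N)^2 = 2 / (2 * (real N)^2)" by simp
  have "real N \<le> real N * real N" using N by simp
  then have "real N * (real N + 1) \<le> 2 * (real N)^2" by (simp add: power2_eq_square algebra_simps)
  then have "2 / (2 * (real N)^2) \<le> 2 / (real N * (real N + 1))"
    using N by (intro divide_left_mono) auto
  then have "1 / (real N)^2 \<le> 2 / real N - 2 / real (Suc N)"
    using e1 e2 by linarith
  then show ?case using step by simp
qed

lemma sum_inv_sq: "(\<Sum>m<N. if m = 0 then 0 else 1 / (real m)^2) \<le> 2"
proof (cases "N = 0")
  case False
  then have "1 \<le> N" by simp
  from sum_inv_sq_aux[OF this] show ?thesis by (smt (verit) divide_nonneg_nonneg of_nat_0_le_iff)
qed simp



context bandit begin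

lemma final: "expected_regret K n adv piB pistar \<le> 40 * conc K pistar piB * sqrt (real n * ln (real K * real n))"
proof -
  define L where "L = sqrt (real n * ln (real K * real n))"
  define c0 where "c0 = conc K pistar piB"
  define lk where "lk = ln (real K)"
  define lkn where "lkn = ln (real K * real n)"
  have c1: "1 \<le> c0" unfolding c0_def by (rule conc_ge1)
  have n1': "1 \<le> real n" using n1 by simp
  have "ln 2 \<le> ln (real K)" using K2 by simp
  then have lk23: "2/3 \<le> lk" unfolding lk_def using ln2_ge_two_thirds by linarith
  have lkn_ge: "lk \<le> lkn" unfolding lk_def lkn_def using K2 n1' by (simp add: mult_le_cancel_left1)
  have lkn0: "0 \<le> lkn" using lk23 lkn_ge by linarith
  have L0: "0 \<le> L" unfolding L_def using lkn0 lkn_def by simp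
  have L2: "L^2 = real n * lkn" unfolding L_def lkn_def using lkn0 lkn_def by simp
  have et2: "et^2 = lk / real n" unfolding eta_def lk_def using lk23 lk_def n1' by simp
  have et0: "0 < et" by (rule eta_pos)
  have A1: "lk / et \<le> L"
  proof (rule power2_le_imp_le[OF _ L0])
    have "(lk / et)^2 = lk^2 / et^2" by (simp add: power_divide)
    also have "\<dots> = lk^2 / (lk / real n)" by (simp add: et2)
    also have "\<dots> = real n * lk" using lk23 n1' by (simp add: power2_eq_square field_simps)
    also have "\<dots> \<le> L^2" unfolding L2 using lkn_ge n1' by simp
    finally show "(lk / et)^2 \<le> L^2" .
  qed
  have A2: "real n * et \<le> L"
  proof (rule power2_le_imp_le[OF _ L0])
    have "(real n * et)^2 = (real n)^2 * et^2" by (simp add: power_mult_distrib)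
    also have "\<dots> = (real n)^2 * (lk / real n)" by (simp add: et2)
    also have "\<dots> = real n * lk" using n1' by (simp add: power2_eq_square)
    also have "\<dots> \<le> L^2" unfolding L2 using lkn_ge n1' by simp
    finally show "(real n * et)^2 \<le> L^2" .
  qed
  have A3: "1 / et \<le> 3/2 * L"
  proof (rule power2_le_imp_le)
    show "0 \<le> 3/2 * L" using L0 by simp
    have "lk * lkn \<ge> (2/3) * (2/3)" using lk23 lkn_ge by (intro mult_mono) auto
    then have i: "1 \<le> 9/4 * (lk * lkn)" by simp
    have "(1 / et)^2 = real n / lk" using et2 by (simp add: power_divide)
    also have "\<dots> \<le> real n * (9/4 * lkn)"
      using i lk23 n1' by (simp add: field_simps)
    also have "\<dots> = (3/2 * L)^2" unfolding power_mult_distrib L2 by (simp add: power2_eq_square)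
    finally show "(1 / et)^2 \<le> (3/2 * L)^2" .
  qed
  have A4: "3 \<le> 4 * L"
  proof -
    have "1 * lkn \<le> real n * lkn" using n1' lkn0 by (intro mult_right_mono) auto
    then have h1: "lkn \<le> L^2" unfolding L2 by simp
    have "(3/4::real)^2 = 9/16" by (simp add: power2_eq_square)
    then have "(3/4)^2 \<le> L^2" using h1 lk23 lkn_ge by linarith
    then have "3/4 \<le> L" using L0 by (rule power2_le_imp_le)
    then show ?thesis by simp
  qed
  have e27: "exp 2 - 1 \<le> (7::real)"
  proof -
    have "exp (2::real) = exp 1 * exp 1" by (simp add: exp_add[symmetric])
    also have "\<dots> \<le> (272/100) * (272/100)" using e_less_272 by (intro mult_mono) auto
    finally show ?thesis by simp
  qed
  have sdb: "sd (Suc m) \<le> sqrt lkn * (1 / sqrt (real m))" if m: "1 \<le> m" "m < n" for m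
  proof -
    have "real K * (real m)^2 \<le> (real K * real n)^2"
    proof -
      have "real K * (real m)^2 \<le> real K * (real n)^2" using m by (intro mult_left_mono power_mono) auto
      also have "\<dots> \<le> real K * real K * (real n)^2" using K2 by (intro mult_right_mono) auto
      moreover have "real K * real K * (real n)^2 = (real K * real n)^2" by (simp add: power2_eq_square)
      ultimately show ?thesis by linarith
    qed
    then have "ln (real K * (real m)^2) \<le> ln ((real K * real n)^2)" using K2 m by (intro ln_mono) auto
    also have "\<dots> = 2 * lkn" unfolding lkn_def using K2 n1' by (simp add: ln_realpow)
    finally have "ln (real K * (real m)^2) / (2 * real m) \<le> 2 * lkn / (2 * real m)"
      using m by (intro divide_right_mono) auto
    then have "sd (Suc m) \<le> sqrt (lkn / real m)" unfolding sd_def by (simp add: real_sqrt_le_iff)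
    also have "\<dots> = sqrt lkn * (1 / sqrt (real m))" by (simp add: real_sqrt_divide)
    finally show ?thesis .
  qed
  have bxb: "bx m \<le> (if m = 0 then 1 else 0) + et / 2 + 2 * sqrt lkn * (if m = 0 then 0 else 1 / sqrt (real m))
              + (if m = 0 then 0 else 1 / (real m)^2)" if m: "m < n" for m
  proof (cases "m = 0")
    case True then show ?thesis using et0 by (simp add: bx_def)
  next
    case False
    then have m1: "1 \<le> m" by simp
    have "1 / (real K * (real m)^2) \<le> 1 / (real m)^2"
      using K2 m1 by (intro divide_left_mono) auto
    moreover have "gam K n (Suc m) = et / 2 + sd (Suc m)" using m1 by (intro gam_ge2) simp
    ultimately show ?thesis using sdb[OF m1 m] False by (simp add: bx_def)
  qed
  have SX: "(\<Sum>t=1..n. bx (t - 1)) \<le> 3 + real n * et / 2 + 4 * L"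
  proof -
    have "(\<Sum>t=1..n. bx (t - 1)) = (\<Sum>m<n. bx m)" unfolding sum1 by simp
    also have "\<dots> \<le> (\<Sum>m<n. (if m = 0 then 1 else 0) + et / 2 + 2 * sqrt lkn * (if m = 0 then 0 else 1 / sqrt (real m))
              + (if m = 0 then 0 else 1 / (real m)^2))"
      by (intro sum_mono bxb) auto
    also have "\<dots> = (\<Sum>m<n. (if m = 0 then 1 else 0)) + real n * et / 2
        + 2 * sqrt lkn * (\<Sum>m<n. if m = 0 then 0 else 1 / sqrt (real m))
        + (\<Sum>m<n. if m = 0 then 0 else 1 / (real m)^2)"
      by (simp add: sum.distrib sum_distrib_left)
    also have "(\<Sum>m<n. (if m = 0 then 1 else 0::real)) = 1" using n1 by simp
    also have "2 * sqrt lkn * (\<Sum>m<n. if m = 0 then 0 else 1 / sqrt (real m)) \<le> 2 * sqrt lkn * (2 * sqrt (real n))"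
      using lkn0 by (intro mult_left_mono sum_inv_sqrt) auto
    also have "2 * sqrt lkn * (2 * sqrt (real n)) = 4 * L"
      unfolding L_def lkn_def by (simp add: real_sqrt_mult)
    also have "(\<Sum>m<n. if m = 0 then 0 else 1 / (real m)^2) \<le> 2" by (rule sum_inv_sq)
    finally show ?thesis by simp
  qed
  have SY: "(\<Sum>t=1..n. by' (t - 1)) \<le> 2 * ((exp 2 - 1) / et)"
  proof -
    have "(\<Sum>t=1..n. by' (t - 1)) = (\<Sum>m<n. (exp 2 - 1) / et * (if m = 0 then 0 else 1 / (real m)^2))"
      unfolding sum1 by (intro sum.cong refl) (simp add: by'_def)
    also have "\<dots> = (exp 2 - 1) / et * (\<Sum>m<n. if m = 0 then 0 else 1 / (real m)^2)"
      by (simp add: sum_distrib_left)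
    also have "\<dots> \<le> (exp 2 - 1) / et * 2"
      using et0 by (intro mult_left_mono sum_inv_sq) auto
    also have "\<dots> = 2 * ((exp 2 - 1) / et)" by simp
    finally show ?thesis .
  qed
  have "expected_regret K n adv piB pistar \<le> lk / et + c0 * (3 + real n * et / 2 + 4 * L) + 2 * ((exp 2 - 1) / et)"
  proof -
    have "(\<Sum>t=1..n. conc K pistar piB * bx (t - 1)) = c0 * (\<Sum>t=1..n. bx (t - 1))"
      by (simp add: c0_def sum_distrib_left)
    also have "\<dots> \<le> c0 * (3 + real n * et / 2 + 4 * L)" using SX c1 by (intro mult_left_mono) auto
    finally show ?thesis using E_main SY unfolding lk_def by linarith
  qed
  also have "\<dots> \<le> L + c0 * (4 * L + L / 2 + 4 * L) + 2 * (7 * (3/2 * L))"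
  proof -
    have X: "3 + real n * et / 2 + 4 * L \<le> 4 * L + L / 2 + 4 * L" using A2 A4 by simp
    have cX: "c0 * (3 + real n * et / 2 + 4 * L) \<le> c0 * (4 * L + L / 2 + 4 * L)"
      by (rule mult_left_mono[OF X]) (use c1 in simp)
    have "(exp 2 - 1) / et = (exp 2 - 1) * (1 / et)" by simp
    also have "\<dots> \<le> 7 * (3/2 * L)" using e27 A3 et0 L0 by (intro mult_mono) auto
    finally have Yb: "(exp 2 - 1) / et \<le> 7 * (3/2 * L)" .
    show ?thesis using A1 cX Yb by linarith
  qed
  also have "\<dots> \<le> 40 * c0 * L"
  proof -
    have e: "c0 * (4 * L + L / 2 + 4 * L) = 17/2 * (c0 * L)" by (simp add: algebra_simps)
    have l: "L \<le> c0 * L" using mult_right_mono[OF c1 L0] by simp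
    have f: "40 * c0 * L = 40 * (c0 * L)" by simp
    have g: "2 * (7 * (3/2 * L)) = 21 * L" by simp
    have z: "0 \<le> c0 * L" using c1 L0 by simp
    show ?thesis unfolding e f g using l z by linarith
  qed
  finally show ?thesis unfolding c0_def L_def .
qed

end


theorem theorem2:
  shows "\<exists>c>0. \<forall>K n adv piB pistar.
     K \<ge> 1 \<longrightarrow> n \<ge> 1 \<longrightarrow>
     set_pmf piB \<subseteq> {..<K} \<longrightarrow> set_pmf pistar \<subseteq> {..<K} \<longrightarrow>
     (\<forall>a. pmf pistar a > 0 \<longrightarrow> pmf piB a > 0) \<longrightarrow>
     (\<forall>h a. 0 \<le> adv h a \<and> adv h a \<le> 1) \<longrightarrow>
     expected_regret K n adv piB pistar \<le> c * conc K pistar piB * sqrt (real n * ln (real K * real n))"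
proof (intro exI[of _ "40::real"] conjI allI impI)
  show "0 < (40::real)" by simp
  fix K n :: nat and adv :: "hist \<Rightarrow> nat \<Rightarrow> real" and piB pistar :: "nat pmf"
  assume K: "K \<ge> 1" and n: "n \<ge> 1" and sB: "set_pmf piB \<subseteq> {..<K}"
    and sS: "set_pmf pistar \<subseteq> {..<K}"
    and supp: "\<forall>a. pmf pistar a > 0 \<longrightarrow> pmf piB a > 0"
    and adv: "\<forall>h a. 0 \<le> adv h a \<and> adv h a \<le> 1"
  show "expected_regret K n adv piB pistar \<le> 40 * conc K pistar piB * sqrt (real n * ln (real K * real n))"
  proof (cases "K = 1")
    case False
    then have K2: "2 \<le> K" using K by simp
    interpret bandit K n adv piB pistar
      by unfold_locales (use K2 n sB sS supp adv in auto)
    show ?thesis by (rule final)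
  next
    case True
    have p0: "pmf pistar 0 = 1" using sum_pmf_eq_1[of "{..<1}" pistar] sS True by simp
    have pol1: "pol (Suc 0) n adv h 0 = 1" for h
      by (simp add: pol_def weight_def)
    have reg0: "regret K n adv pistar h = 0" for h
      using True by (simp add: regret_def p0 pol1)
    have rf: "regret K n adv pistar = (\<lambda>_. 0)" by (intro ext reg0)
    have "expected_regret K n adv piB pistar = 0"
      by (simp add: expected_regret_def rf)
    moreover have "0 \<le> conc K pistar piB" unfolding conc_def by (intro sum_nonneg) simp
    moreover have "0 \<le> sqrt (real n * ln (real K * real n))" using True n by simp
    ultimately show ?thesis by simp
  qed
qed


end
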